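(* Let $k<l$ be positive integers and let $\gamma\in U(k,l)$ be diagonalizable with all eigenvalues of modulus $1$. Then $\gamma$ has an eigenvector lying in the closure $\overline{N_-^{k,l}}$ of $N_-^{k,l}$ in $\mathbb{C}^{k+l}$.
   Context: $\prec u,v\succ_{k,l}=-\sum_{j=1}^k u_j\bar v_j+\sum_{j=k+1}^{k+l}u_j\bar v_j$ on $\mathbb{C}^{k+l}$; $N_-^{k,l}=\{v:\prec v,v\succ_{k,l}<0\}$; $U(k,l)\subset GL(k+l,\mathbb{C})$ is the group of matrices preserving this form. Eigenvectors are nonzero. *)

theory Defs
  imports "Jordan_Normal_Form.Matrix" "Jordan_Normal_Form.Char_Poly" Complex_Main
begin

definition herm_form :: "nat \<Rightarrow> nat \<Rightarrow> complex vec \<Rightarrow> complex vec \<Rightarrow> complex" where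
  "herm_form k l u v =
     - (\<Sum>j<k. u $ j * cnj (v $ j)) + (\<Sum>j\<in>{k..<k+l}. u $ j * cnj (v $ j))"

definition neg_cone :: "nat \<Rightarrow> nat \<Rightarrow> complex vec set" where
  "neg_cone k l = {v \<in> carrier_vec (k+l). Re (herm_form k l v v) < 0 \<and> Im (herm_form k l v v) = 0}"

text \<open>Topological closure in C^n of a set of vectors of length n (standard topology,
  here expressed with the coordinatewise sup-metric, which induces it).\<close>
definition vec_closure :: "nat \<Rightarrow> complex vec set \<Rightarrow> complex vec set" where
  "vec_closure n S = {v \<in> carrier_vec n. \<forall>e>0. \<exists>w\<in>S. \<forall>i<n. cmod (v $ i - w $ i) < e}"

definition U_group :: "nat \<Rightarrow> nat \<Rightarrow> complex mat set" where
  "U_group k l = {g \<in> carrier_mat (k+l) (k+l). invertible_mat g \<and>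
     (\<forall>u\<in>carrier_vec (k+l). \<forall>v\<in>carrier_vec (k+l).
        herm_form k l (g *\<^sub>v u) (g *\<^sub>v v) = herm_form k l u v)}"

definition diagonalizable :: "complex mat \<Rightarrow> bool" where
  "diagonalizable A = (\<exists>D. diagonal_mat D \<and> similar_mat A D)"

end

theory Submission
  imports Defs
begin

definition sg :: "nat \<Rightarrow> nat \<Rightarrow> complex" where "sg k a = (if a < k then -1 else 1)"

lemma herm_alt: "herm_form k l u v = (\<Sum>a<k+l. sg k a * u $ a * cnj (v $ a))"
proof -
  have e: "{..<k+l} = {..<k} \<union> {k..<k+l}" by auto
  have "(\<Sum>a<k+l. sg k a * u $ a * cnj (v $ a)) = (\<Sum>a<k. sg k a * u $ a * cnj (v $ a)) + (\<Sum>a\<in>{k..<k+l}. sg k a * u $ a * cnj (v $ a))"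
    unfolding e by (rule sum.union_disjoint) auto
  also have "\<dots> = - (\<Sum>j<k. u $ j * cnj (v $ j)) + (\<Sum>j\<in>{k..<k+l}. u $ j * cnj (v $ j))"
    by (simp add: sg_def sum_negf)
  finally show ?thesis unfolding herm_form_def by simp
qed

lemma herm_smult: "herm_form k l (a \<cdot>\<^sub>v u) (b \<cdot>\<^sub>v v) = a * cnj b * herm_form k l u v"
  if "u \<in> carrier_vec (k+l)" "v \<in> carrier_vec (k+l)"
  using that unfolding herm_alt by (simp add: sum_distrib_left mult_ac)

lemma herm_Im: "Im (herm_form k l v v) = 0"
proof -
  have "Im (sg k a * v $ a * cnj (v $ a)) = 0" for a
    by (simp add: sg_def)
  then show ?thesis unfolding herm_alt Im_sum by simp
qed

lemma herm_expand:
  assumes P: "P \<in> carrier_mat n n" and n: "n = k+l" and x: "x \<in> carrier_vec n" and y: "y \<in> carrier_vec n"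
  shows "herm_form k l (P *\<^sub>v x) (P *\<^sub>v y) =
    (\<Sum>i<n. \<Sum>j<n. x $ i * cnj (y $ j) * herm_form k l (col P i) (col P j))"
proof -
  have r: "(P *\<^sub>v z) $ a = (\<Sum>i<n. P $$ (a,i) * z $ i)" if "a < n" "z \<in> carrier_vec n" for a z
    using P that by (auto simp: scalar_prod_def row_def lessThan_atLeast0 mult_ac intro!: sum.cong)
  have c: "col P i $ a = P $$ (a,i)" if "a < n" "i < n" for a i using P that by simp
  have "herm_form k l (P *\<^sub>v x) (P *\<^sub>v y) = (\<Sum>a<n. sg k a * (\<Sum>i<n. P $$ (a,i) * x $ i) * cnj (\<Sum>j<n. P $$ (a,j) * y $ j))"
    unfolding herm_alt n[symmetric] using x y by (intro sum.cong) (auto simp: r)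
  also have "\<dots> = (\<Sum>a<n. \<Sum>i<n. \<Sum>j<n. x $ i * cnj (y $ j) * (sg k a * P $$ (a,i) * cnj (P $$ (a,j))))"
  proof (rule sum.cong[OF refl])
    fix a
    have "sg k a * (\<Sum>i<n. P $$ (a,i) * x $ i) * cnj (\<Sum>j<n. P $$ (a,j) * y $ j)
       = sg k a * ((\<Sum>i<n. P $$ (a,i) * x $ i) * (\<Sum>j<n. cnj (P $$ (a,j) * y $ j)))"
      by (simp only: cnj_sum mult.assoc)
    also have "\<dots> = sg k a * (\<Sum>i<n. \<Sum>j<n. P $$ (a,i) * x $ i * cnj (P $$ (a,j) * y $ j))"
      by (simp only: sum_product)
    also have "\<dots> = (\<Sum>i<n. \<Sum>j<n. sg k a * (P $$ (a,i) * x $ i * cnj (P $$ (a,j) * y $ j)))"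
      by (simp only: sum_distrib_left)
    also have "\<dots> = (\<Sum>i<n. \<Sum>j<n. x $ i * cnj (y $ j) * (sg k a * P $$ (a,i) * cnj (P $$ (a,j))))"
      by (intro sum.cong refl) (simp add: complex_cnj_mult)
    finally show "sg k a * (\<Sum>i<n. P $$ (a,i) * x $ i) * cnj (\<Sum>j<n. P $$ (a,j) * y $ j)
       = (\<Sum>i<n. \<Sum>j<n. x $ i * cnj (y $ j) * (sg k a * P $$ (a,i) * cnj (P $$ (a,j))))" .
  qed
  also have "\<dots> = (\<Sum>i<n. \<Sum>j<n. \<Sum>a<n. x $ i * cnj (y $ j) * (sg k a * P $$ (a,i) * cnj (P $$ (a,j))))"
    by (subst sum.swap, rule sum.cong[OF refl], rule sum.swap)
  also have "\<dots> = (\<Sum>i<n. \<Sum>j<n. x $ i * cnj (y $ j) * herm_form k l (col P i) (col P j))"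
    unfolding herm_alt n[symmetric] by (intro sum.cong refl) (simp add: sum_distrib_left c)
  finally show ?thesis .
qed

lemma herm_zero_left: "herm_form k l (0\<^sub>v (k+l)) v = 0"
  unfolding herm_alt by simp

lemma herm_zero_right: "herm_form k l u (0\<^sub>v (k+l)) = 0"
  unfolding herm_alt by simp

lemma col_unit: fixes P :: "complex mat" assumes "P \<in> carrier_mat n n" "i < n" shows "col P i = P *\<^sub>v unit_vec n i"
  using assms by (intro eq_vecI) auto

lemma diag_ev:
  assumes D: "D \<in> carrier_mat n n" "diagonal_mat D" and x: "x \<in> carrier_vec n"
    and supp: "\<And>j. j < n \<Longrightarrow> x $ j \<noteq> 0 \<Longrightarrow> D $$ (j,j) = \<mu>"
  shows "D *\<^sub>v x = \<mu> \<cdot>\<^sub>v x"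
proof (rule eq_vecI)
  show "dim_vec (D *\<^sub>v x) = dim_vec (\<mu> \<cdot>\<^sub>v x)" using D x by simp
  fix j assume j: "j < dim_vec (\<mu> \<cdot>\<^sub>v x)"
  hence jn: "j < n" using x by simp
  have "(D *\<^sub>v x) $ j = (\<Sum>i\<in>{0..<n}. D $$ (j,i) * x $ i)"
    using D x jn by (simp add: scalar_prod_def row_def)
  also have "\<dots> = D $$ (j,j) * x $ j"
  proof -
    have "(\<Sum>i\<in>{0..<n}. D $$ (j,i) * x $ i) = (\<Sum>i\<in>{0..<n}. if i = j then D $$ (j,j) * x $ j else 0)"
      by (rule sum.cong) (use D jn in \<open>auto simp: diagonal_mat_def\<close>)
    then show ?thesis using jn by simp
  qed
  also have "\<dots> = \<mu> * x $ j" using supp[OF jn] by (cases "x $ j = 0") auto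
  finally show "(D *\<^sub>v x) $ j = (\<mu> \<cdot>\<^sub>v x) $ j" using jn x by simp
qed

lemma orth:
  assumes g: "\<gamma> \<in> U_group k l"
    and ev1: "\<And>\<mu>. eigenvalue \<gamma> \<mu> \<Longrightarrow> cmod \<mu> = 1"
    and u: "u \<in> carrier_vec (k+l)" and v: "v \<in> carrier_vec (k+l)"
    and gu: "\<gamma> *\<^sub>v u = a \<cdot>\<^sub>v u" and gv: "\<gamma> *\<^sub>v v = b \<cdot>\<^sub>v v" and ab: "a \<noteq> b"
  shows "herm_form k l u v = 0"
proof (cases "u = 0\<^sub>v (k+l) \<or> v = 0\<^sub>v (k+l)")
  case True then show ?thesis using herm_zero_left herm_zero_right by auto
next
  case False
  have gc: "\<gamma> \<in> carrier_mat (k+l) (k+l)" using g unfolding U_group_def by auto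
  have "eigenvector \<gamma> u a" using False u gu gc unfolding eigenvector_def by auto
  hence ma: "cmod a = 1" using ev1 unfolding eigenvalue_def by auto
  have "eigenvector \<gamma> v b" using False v gv gc unfolding eigenvector_def by auto
  hence mb: "cmod b = 1" using ev1 unfolding eigenvalue_def by auto
  have "herm_form k l u v = herm_form k l (\<gamma> *\<^sub>v u) (\<gamma> *\<^sub>v v)"
    using g u v unfolding U_group_def by auto
  also have "\<dots> = a * cnj b * herm_form k l u v" using gu gv herm_smult u v by simp
  finally have e: "(1 - a * cnj b) * herm_form k l u v = 0" by (simp add: algebra_simps)
  have bb: "cnj b * b = 1" using mb
    by (metis complex_cnj_mult complex_mod_mult_cnj mult.commute norm_one of_real_1 complex_norm_square power2_eq_square mult.right_neutral)
  have "a * cnj b \<noteq> 1"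
  proof
    assume "a * cnj b = 1"
    hence "a * cnj b * b = b" by simp
    hence "a = b" using bb by (simp add: mult.assoc)
    with ab show False by simp
  qed
  with e show ?thesis by simp
qed

theorem mainTheorem14:
  fixes k l :: nat and \<gamma> :: "complex mat"
  assumes "0 < k" and "k < l"
    and "\<gamma> \<in> U_group k l"
    and "diagonalizable \<gamma>"
    and "\<And>\<mu>. eigenvalue \<gamma> \<mu> \<Longrightarrow> cmod \<mu> = 1"
  shows "\<exists>v \<mu>. eigenvector \<gamma> v \<mu> \<and> v \<in> vec_closure (k+l) (neg_cone k l)"
proof -
  define n where "n = k + l"
  have gc: "\<gamma> \<in> carrier_mat n n" using assms(3) unfolding U_group_def n_def by auto
  obtain D where Dd: "diagonal_mat D" and sim: "similar_mat \<gamma> D"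
    using assms(4) unfolding diagonalizable_def by auto
  obtain P Q where wit: "similar_mat_wit \<gamma> D P Q" using sim unfolding similar_mat_def by auto
  have Dc: "D \<in> carrier_mat n n" and Pc: "P \<in> carrier_mat n n" and Qc: "Q \<in> carrier_mat n n"
    and PQ: "P * Q = 1\<^sub>m n" and QP: "Q * P = 1\<^sub>m n" and gam: "\<gamma> = P * D * Q"
    using wit gc unfolding similar_mat_wit_def Let_def by auto
  have gP: "\<gamma> * P = P * D"
  proof -
    have "\<gamma> * P = (P * D) * (Q * P)" using gam Pc Dc Qc by (simp add: assoc_mult_mat[of _ n n _ n _ n])
    also have "\<dots> = P * D" using QP Pc Dc by simp
    finally show ?thesis .
  qed
  have evP: "\<gamma> *\<^sub>v (P *\<^sub>v x) = \<mu> \<cdot>\<^sub>v (P *\<^sub>v x)"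
    if x: "x \<in> carrier_vec n" and supp: "\<And>j. j < n \<Longrightarrow> x $ j \<noteq> 0 \<Longrightarrow> D $$ (j,j) = \<mu>" for x \<mu>
  proof -
    have "\<gamma> *\<^sub>v (P *\<^sub>v x) = (\<gamma> * P) *\<^sub>v x" using gc Pc x by simp
    also have "\<dots> = P *\<^sub>v (D *\<^sub>v x)" unfolding gP using Pc Dc x by simp
    also have "\<dots> = P *\<^sub>v (\<mu> \<cdot>\<^sub>v x)" using diag_ev[OF Dc Dd x supp] by simp
    also have "\<dots> = \<mu> \<cdot>\<^sub>v (P *\<^sub>v x)" using mult_mat_vec[OF Pc x] .
    finally show ?thesis .
  qed
  define G where "G i j = herm_form k l (col P i) (col P j)" for i j
  have G0: "G i j = 0" if "i < n" "j < n" "D $$ (i,i) \<noteq> D $$ (j,j)" for i j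
  proof -
    have ci: "col P i = P *\<^sub>v unit_vec n i" "col P j = P *\<^sub>v unit_vec n j"
      using col_unit[OF Pc] that by auto
    have e1: "\<gamma> *\<^sub>v col P i = D $$ (i,i) \<cdot>\<^sub>v col P i"
      unfolding ci by (rule evP) (auto simp: unit_vec_def split: if_splits)
    have e2: "\<gamma> *\<^sub>v col P j = D $$ (j,j) \<cdot>\<^sub>v col P j"
      unfolding ci by (rule evP) (auto simp: unit_vec_def split: if_splits)
    have c1: "col P i \<in> carrier_vec (k+l)" "col P j \<in> carrier_vec (k+l)"
      using Pc unfolding n_def by (auto simp: col_def)
    show ?thesis unfolding G_def
      by (rule orth[OF assms(3) assms(5) c1 e1 e2 that(3)])
  qed
  define c where "c = Q *\<^sub>v unit_vec n 0"
  have cc: "c \<in> carrier_vec n" using Qc unfolding c_def by simp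
  have Pc_e: "P *\<^sub>v c = unit_vec n 0" unfolding c_def using Pc Qc PQ
    by (simp add: assoc_mult_mat_vec[symmetric, of _ n n _ n])
  have n0: "0 < n" using assms(1) unfolding n_def by simp
  have He: "herm_form k l (unit_vec n 0) (unit_vec n 0) = -1"
  proof -
    have "herm_form k l (unit_vec n 0) (unit_vec n 0) = (\<Sum>a<n. if a = 0 then sg k 0 else 0)"
      unfolding herm_alt n_def[symmetric] by (intro sum.cong) (auto simp: unit_vec_def)
    also have "\<dots> = -1" using n0 assms(1) by (simp add: sg_def)
    finally show ?thesis .
  qed
  define X where "X \<mu> = vec n (\<lambda>j. if D $$ (j,j) = \<mu> then c $ j else 0)" for \<mu>
  define L where "L = (\<lambda>j. D $$ (j,j)) ` {..<n}"
  have XC: "X \<mu> \<in> carrier_vec n" for \<mu> unfolding X_def by simp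
  have key: "(\<Sum>\<mu>\<in>L. herm_form k l (P *\<^sub>v X \<mu>) (P *\<^sub>v X \<mu>)) = -1"
  proof -
    have "(\<Sum>\<mu>\<in>L. herm_form k l (P *\<^sub>v X \<mu>) (P *\<^sub>v X \<mu>))
       = (\<Sum>\<mu>\<in>L. \<Sum>i<n. \<Sum>j<n. X \<mu> $ i * cnj (X \<mu> $ j) * G i j)"
      unfolding G_def by (intro sum.cong refl herm_expand[OF Pc n_def XC XC])
    also have "\<dots> = (\<Sum>i<n. \<Sum>j<n. \<Sum>\<mu>\<in>L. X \<mu> $ i * cnj (X \<mu> $ j) * G i j)"
      by (subst sum.swap, rule sum.cong[OF refl], rule sum.swap)
    also have "\<dots> = (\<Sum>i<n. \<Sum>j<n. c $ i * cnj (c $ j) * G i j)"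
    proof (intro sum.cong refl)
      fix i j assume i: "i \<in> {..<n}" and j: "j \<in> {..<n}"
      have "(\<Sum>\<mu>\<in>L. X \<mu> $ i * cnj (X \<mu> $ j) * G i j)
          = (\<Sum>\<mu>\<in>L. if \<mu> = D $$ (i,i) then (if D $$ (j,j) = D $$ (i,i) then c $ i * cnj (c $ j) * G i j else 0) else 0)"
        using i j by (intro sum.cong refl) (auto simp: X_def)
      also have "\<dots> = (if D $$ (j,j) = D $$ (i,i) then c $ i * cnj (c $ j) * G i j else 0)"
        using i unfolding L_def by (simp add: sum.delta[OF finite_imageI])
      also have "\<dots> = c $ i * cnj (c $ j) * G i j" using G0[of i j] i j by auto
      finally show "(\<Sum>\<mu>\<in>L. X \<mu> $ i * cnj (X \<mu> $ j) * G i j) = c $ i * cnj (c $ j) * G i j" .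
    qed
    also have "\<dots> = herm_form k l (P *\<^sub>v c) (P *\<^sub>v c)"
      unfolding G_def by (rule herm_expand[OF Pc n_def cc cc, symmetric])
    also have "\<dots> = -1" using Pc_e He by simp
    finally show ?thesis .
  qed
  have "(\<Sum>\<mu>\<in>L. Re (herm_form k l (P *\<^sub>v X \<mu>) (P *\<^sub>v X \<mu>))) = -1"
    using arg_cong[OF key, of Re] by (simp add: Re_sum)
  hence "\<exists>\<mu>\<in>L. Re (herm_form k l (P *\<^sub>v X \<mu>) (P *\<^sub>v X \<mu>)) < 0"
  proof (rule contrapos_pp)
    assume "\<not> (\<exists>\<mu>\<in>L. Re (herm_form k l (P *\<^sub>v X \<mu>) (P *\<^sub>v X \<mu>)) < 0)"
    hence "\<forall>\<mu>\<in>L. 0 \<le> Re (herm_form k l (P *\<^sub>v X \<mu>) (P *\<^sub>v X \<mu>))" by (simp add: not_less)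
    hence "0 \<le> (\<Sum>\<mu>\<in>L. Re (herm_form k l (P *\<^sub>v X \<mu>) (P *\<^sub>v X \<mu>)))" by (intro sum_nonneg) blast
    thus "(\<Sum>\<mu>\<in>L. Re (herm_form k l (P *\<^sub>v X \<mu>) (P *\<^sub>v X \<mu>))) \<noteq> -1" by linarith
  qed
  then obtain \<mu> where "\<mu> \<in> L" and neg: "Re (herm_form k l (P *\<^sub>v X \<mu>) (P *\<^sub>v X \<mu>)) < 0"
    by blast
  define w where "w = P *\<^sub>v X \<mu>"
  have wc: "w \<in> carrier_vec (k+l)" unfolding w_def n_def[symmetric] using Pc XC by simp
  have wnz: "w \<noteq> 0\<^sub>v (k+l)"
  proof
    assume "w = 0\<^sub>v (k+l)"
    hence "herm_form k l w w = 0" using herm_zero_left by simp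
    thus False using neg unfolding w_def by simp
  qed
  have gw: "\<gamma> *\<^sub>v w = \<mu> \<cdot>\<^sub>v w" unfolding w_def
    by (rule evP[OF XC]) (auto simp: X_def split: if_splits)
  have "eigenvector \<gamma> w \<mu>" unfolding eigenvector_def using wc wnz gw gc n_def by auto
  moreover have "w \<in> neg_cone k l" unfolding neg_cone_def using wc neg herm_Im unfolding w_def by auto
  hence "w \<in> vec_closure (k+l) (neg_cone k l)" unfolding vec_closure_def using wc by force
  ultimately show ?thesis by blast
qed

end
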